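(* Let $0<R\le\infty$ and let $\psi$ be a quasiconcave function on $[0,R)$. Then: (i) $T_\psi$ is bounded from $L^1(0,R)$ to $L^1(0,R)$ if and only if $\psi$ satisfies the $B$-condition; (ii) $T_\psi$ is bounded from $M_\psi(0,R)$ to $M_\psi(0,R)$ if and only if $\psi$ satisfies the $B$-condition.
   Context: For a measurable a.e. finite function $f$ on $(0,R)$, $f^*$ is its non-increasing rearrangement, $f^*(t)=\inf\{\lambda>0: |\{x:|f(x)|>\lambda\}|\le t\}$, and $f^{**}(t)=\frac1t\int_0^t f^*(s)\,ds$. A function $\psi\colon[0,R)\to[0,\infty)$ is quasiconcave if $\psi(t)=0$ iff $t=0$, $\psi$ is non-decreasing, and $\psi(t)/t$ is non-increasing on $(0,R)$. It satisfies the $B$-condition if there is $C>0$ with $\frac1t\int_0^t \frac{ds}{\psi(s)}\le \frac{C}{\psi(t)}$ for all $t\in(0,R)$. $T_\psi f(t)=\frac{1}{\psi(t)}\sup_{t<s<R}\psi(s)f^*(s)$, $t\in(0,R)$. $M_\psi(0,R)$ is the set of $f$ with $\|f\|_{M_\psi}=\sup_{0<s<R}\psi(s)f^{**}(s)<\infty$. *)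

theory Defs
  imports "HOL-Analysis.Analysis"
begin

definition ivl :: "ereal \<Rightarrow> real set" where
  "ivl R = {x. 0 < x \<and> ereal x < R}"

definition distf :: "ereal \<Rightarrow> (real \<Rightarrow> ennreal) \<Rightarrow> ennreal \<Rightarrow> ennreal" where
  "distf R g lam = emeasure lebesgue {x \<in> ivl R. g x > lam}"

definition rearr :: "ereal \<Rightarrow> (real \<Rightarrow> ennreal) \<Rightarrow> real \<Rightarrow> ennreal" where
  "rearr R g t = Inf {lam. 0 < lam \<and> distf R g lam \<le> ennreal t}"

definition dblstar :: "ereal \<Rightarrow> (real \<Rightarrow> ennreal) \<Rightarrow> real \<Rightarrow> ennreal" where
  "dblstar R g t = ennreal (1 / t) * (\<integral>\<^sup>+ s \<in> {0<..<t}. rearr R g s \<partial>lborel)"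

definition quasiconcave_fn :: "ereal \<Rightarrow> (real \<Rightarrow> real) \<Rightarrow> bool" where
  "quasiconcave_fn R psi \<longleftrightarrow>
     (\<forall>t. 0 \<le> t \<and> ereal t < R \<longrightarrow> 0 \<le> psi t \<and> (psi t = 0 \<longleftrightarrow> t = 0)) \<and>
     (\<forall>s t. 0 \<le> s \<and> s \<le> t \<and> ereal t < R \<longrightarrow> psi s \<le> psi t) \<and>
     (\<forall>s t. 0 < s \<and> s \<le> t \<and> ereal t < R \<longrightarrow> psi t / t \<le> psi s / s)"

definition B_condition :: "ereal \<Rightarrow> (real \<Rightarrow> real) \<Rightarrow> bool" where
  "B_condition R psi \<longleftrightarrow> (\<exists>C>0. \<forall>t \<in> ivl R.
     ennreal (1 / t) * (\<integral>\<^sup>+ s \<in> {0<..<t}. ennreal (1 / psi s) \<partial>lborel) \<le> ennreal (C / psi t))"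

definition Tpsi :: "(real \<Rightarrow> real) \<Rightarrow> ereal \<Rightarrow> (real \<Rightarrow> ennreal) \<Rightarrow> real \<Rightarrow> ennreal" where
  "Tpsi psi R g t = (SUP s \<in> {s. t < s \<and> ereal s < R}. ennreal (psi s) * rearr R g s) / ennreal (psi t)"

definition L1norm :: "ereal \<Rightarrow> (real \<Rightarrow> ennreal) \<Rightarrow> ennreal" where
  "L1norm R g = (\<integral>\<^sup>+ x \<in> ivl R. g x \<partial>lebesgue)"

definition Mnorm :: "(real \<Rightarrow> real) \<Rightarrow> ereal \<Rightarrow> (real \<Rightarrow> ennreal) \<Rightarrow> ennreal" where
  "Mnorm psi R g = (SUP s \<in> ivl R. ennreal (psi s) * dblstar R g s)"

end

theory Submission
  imports Defs
begin

lemma qc_pos: "quasiconcave_fn R psi \<Longrightarrow> t \<in> ivl R \<Longrightarrow> psi t > 0"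
  unfolding quasiconcave_fn_def ivl_def
  by (metis less_eq_real_def mem_Collect_eq)

lemma qc_mono: "quasiconcave_fn R psi \<Longrightarrow> 0 \<le> s \<Longrightarrow> s \<le> t \<Longrightarrow> ereal t < R \<Longrightarrow> psi s \<le> psi t"
  unfolding quasiconcave_fn_def by blast

lemma qc_ratio: "quasiconcave_fn R psi \<Longrightarrow> 0 < s \<Longrightarrow> s \<le> t \<Longrightarrow> ereal t < R \<Longrightarrow> psi t * s \<le> psi s * t"
proof -
  assume q: "quasiconcave_fn R psi" and h: "0 < s" "s \<le> t" "ereal t < R"
  then have "psi t / t \<le> psi s / s" unfolding quasiconcave_fn_def by blast
  then show ?thesis using h by (simp add: divide_simps mult.commute)
qed

lemma ereal_lt_mono: "y \<le> x \<Longrightarrow> ereal x < R \<Longrightarrow> ereal y < R"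
  by (metis ereal_less_eq(3) order_le_less_trans)

lemma downclosed_borel:
  fixes S :: "real set"
  assumes dc: "\<And>x y. x \<in> S \<Longrightarrow> y \<le> x \<Longrightarrow> y \<in> S"
  shows "S \<in> sets borel"
proof (cases "bdd_above S \<and> S \<noteq> {}")
  case True
  define c where "c = Sup S"
  have "S = {..<c} \<union> (S \<inter> {c})"
  proof (intro set_eqI iffI)
    fix x assume "x \<in> S"
    then have "x \<le> c" using True c_def by (simp add: cSup_upper)
    then show "x \<in> {..<c} \<union> (S \<inter> {c})" using \<open>x \<in> S\<close> by auto
  next
    fix x assume "x \<in> {..<c} \<union> (S \<inter> {c})"
    then show "x \<in> S"
    proof
      assume "x \<in> {..<c}"
      then obtain y where "y \<in> S" "x < y" using True c_def
        by (metis lessThan_iff less_cSupE)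
      then show ?thesis using dc by auto
    qed auto
  qed
  moreover have "S \<inter> {c} \<in> sets borel"
    by (cases "c \<in> S") auto
  ultimately show ?thesis by (metis sets.Un atLeastLessThan_borel borel_open open_lessThan)
next
  case False
  then consider "S = {}" | "\<not> bdd_above S" by blast
  then show ?thesis
  proof cases
    case 2
    have "\<forall>x. x \<in> S"
    proof
      fix x
      obtain y where "y \<in> S" "x \<le> y" using 2 unfolding bdd_above_def by (meson linear)
      then show "x \<in> S" using dc by auto
    qed
    then have "S = UNIV" by auto
    then show ?thesis by simp
  qed simp
qed

lemma antitone_meas:
  fixes f :: "real \<Rightarrow> ennreal"
  assumes "\<And>x y. x \<le> y \<Longrightarrow> f y \<le> f x"
  shows "f \<in> borel_measurable borel"
proof (rule borel_measurableI_greater)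
  fix a
  have "{x. a < f x} \<in> sets borel"
    by (rule downclosed_borel) (metis assms mem_Collect_eq order_less_le_trans)
  then show "{x \<in> space borel. a < f x} \<in> sets borel" by simp
qed

lemma div_as_mult: "0 < p \<Longrightarrow> x / ennreal p = x * ennreal (1/p)"
  by (metis divide_ennreal ennreal_times_divide mult.right_neutral ennreal_1 zero_le_one)

lemma ivl_borel: "ivl R \<in> sets borel"
proof -
  have "{x. ereal x < R} \<in> sets borel"
    by (rule downclosed_borel) (auto intro: ereal_lt_mono)
  moreover have "ivl R = {0<..} \<inter> {x. ereal x < R}" unfolding ivl_def by auto
  ultimately show ?thesis by auto
qed

lemma ivl_lebesgue: "ivl R \<in> sets lebesgue"
  using ivl_borel by auto

lemma wmeas:
  assumes q: "quasiconcave_fn R psi"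
  shows "(\<lambda>t. ennreal (1/psi t) * indicator (ivl R) t) \<in> borel_measurable borel"
proof -
  define h where "h t = (if t \<le> 0 then \<infinity> else if ereal t < R then ennreal (1/psi t) else 0)" for t
  have "h \<in> borel_measurable borel"
  proof (rule antitone_meas)
    fix x y :: real assume xy: "x \<le> y"
    show "h y \<le> h x"
    proof (cases "x \<le> 0")
      case True then show ?thesis by (simp add: h_def)
    next
      case False
      show ?thesis
      proof (cases "ereal y < R")
        case True
        then have "ereal x < R" using xy by (meson ereal_less_eq(3) le_less_trans)
        have "psi x \<le> psi y" using qc_mono[OF q _ xy True] False by auto
        moreover have "psi x > 0" using qc_pos[OF q, of x] False \<open>ereal x < R\<close> by (auto simp: ivl_def)
        ultimately have "1/psi y \<le> 1/psi x" by (simp add: frac_le)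
        then show ?thesis using False xy True \<open>ereal x < R\<close> by (auto simp: h_def intro: ennreal_leI)
      qed (use xy in \<open>auto simp: h_def\<close>)
    qed
  qed
  moreover have "(\<lambda>t. ennreal (1/psi t) * indicator (ivl R) t) = (\<lambda>t. h t * indicator {0<..} t)"
    by (auto simp: h_def ivl_def indicator_def)
  ultimately show ?thesis by simp
qed

lemma wmeas2:
  assumes q: "quasiconcave_fn R psi" and A: "A \<subseteq> ivl R" "A \<in> sets borel"
  shows "(\<lambda>t. ennreal (1/psi t) * indicator A t) \<in> borel_measurable borel"
proof -
  have "(\<lambda>t. ennreal (1/psi t) * indicator (ivl R) t * indicator A t) \<in> borel_measurable borel"
    using wmeas[OF q] A by measurable
  moreover have "(\<lambda>t. ennreal (1/psi t) * indicator (ivl R) t * indicator A t) = (\<lambda>t. ennreal (1/psi t) * indicator A t)"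
  proof (rule ext)
    fix t show "ennreal (1/psi t) * indicator (ivl R) t * indicator A t = ennreal (1/psi t) * indicator A t"
      by (cases "t \<in> A") (use A in auto)
  qed
  ultimately show ?thesis by simp
qed

lemma Tpsi_antitone:
  assumes q: "quasiconcave_fn R psi" and xy: "x \<in> ivl R" "y \<in> ivl R" "x \<le> y"
  shows "Tpsi psi R g y \<le> Tpsi psi R g x"
proof -
  let ?S = "\<lambda>t. (SUP s \<in> {s. t < s \<and> ereal s < R}. ennreal (psi s) * rearr R g s)"
  have S: "?S y \<le> ?S x" by (rule SUP_subset_mono) (use xy in auto)
  have px: "psi x > 0" "psi y > 0" using qc_pos[OF q] xy by auto
  have "psi x \<le> psi y" using qc_mono[OF q, of x y] xy by (auto simp: ivl_def)
  then have "1 / psi y \<le> 1 / psi x" using px by (simp add: frac_le)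
  then have "?S y * ennreal (1 / psi y) \<le> ?S x * ennreal (1 / psi x)"
    using S by (intro mult_mono ennreal_leI) auto
  then show ?thesis unfolding Tpsi_def using px by (simp add: div_as_mult)
qed

lemma Tpsi_set_borel:
  assumes q: "quasiconcave_fn R psi"
  shows "{x \<in> ivl R. lam < Tpsi psi R g x} \<in> sets borel"
proof -
  define D where "D = {x. x \<le> 0 \<or> (x \<in> ivl R \<and> lam < Tpsi psi R g x)}"
  have "D \<in> sets borel"
  proof (rule downclosed_borel)
    fix x y assume "x \<in> D" "y \<le> x"
    show "y \<in> D"
    proof (cases "y \<le> 0")
      case False
      then have "x \<in> ivl R" "lam < Tpsi psi R g x" using \<open>x \<in> D\<close> \<open>y \<le> x\<close> by (auto simp: D_def)
      moreover have "y \<in> ivl R" using \<open>x \<in> ivl R\<close> \<open>y \<le> x\<close> False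
        by (auto simp: ivl_def intro: ereal_lt_mono)
      ultimately show ?thesis using Tpsi_antitone[OF q \<open>y \<in> ivl R\<close> \<open>x \<in> ivl R\<close> \<open>y \<le> x\<close>, of g]
        by (auto simp: D_def)
    qed (auto simp: D_def)
  qed
  moreover have "{x \<in> ivl R. lam < Tpsi psi R g x} = D \<inter> {0<..}" by (auto simp: D_def ivl_def)
  ultimately show ?thesis by auto
qed

lemma emeas_leb: "A \<in> sets borel \<Longrightarrow> emeasure lebesgue A = emeasure lborel A"
  by (simp add: emeasure_completion main_part_sets)

lemma emeas_leb_Ioo: "a \<le> b \<Longrightarrow> emeasure lebesgue {a<..<(b::real)} = ennreal (b - a)"
  by (simp add: emeas_leb)

lemma emeas_leb_Ioc: "a \<le> b \<Longrightarrow> emeasure lebesgue {a<..(b::real)} = ennreal (b - a)"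
  by (simp add: emeas_leb)

lemma rearr_antitone: "u \<le> s \<Longrightarrow> rearr R g s \<le> rearr R g u"
  unfolding rearr_def
  by (rule Inf_superset_mono) (auto intro: order_trans ennreal_leI)

lemma rearr_le_dblstar:
  assumes s: "s > 0"
  shows "rearr R g s \<le> dblstar R g s"
proof -
  have "(\<integral>\<^sup>+ u. rearr R g s * indicator {0<..<s} u \<partial>lborel) \<le> (\<integral>\<^sup>+ u. rearr R g u * indicator {0<..<s} u \<partial>lborel)"
    by (intro nn_integral_mono) (auto simp: indicator_def intro: rearr_antitone)
  moreover have "(\<integral>\<^sup>+ u. rearr R g s * indicator {0<..<s} u \<partial>lborel) = rearr R g s * ennreal s"
    using s by (simp add: nn_integral_cmult_indicator)
  ultimately have "ennreal (1/s) * (rearr R g s * ennreal s) \<le> dblstar R g s"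
    unfolding dblstar_def by (intro mult_left_mono) auto
  moreover have "ennreal (1/s) * (rearr R g s * ennreal s) = rearr R g s"
  proof -
    have "ennreal (1/s) * ennreal s = 1" using s by (simp flip: ennreal_mult)
    then show ?thesis by (metis mult.commute mult.left_commute mult_1_right)
  qed
  ultimately show ?thesis by simp
qed

lemma rearr_le_antitone:
  assumes anti: "\<And>x y. x \<in> ivl R \<Longrightarrow> y \<in> ivl R \<Longrightarrow> x \<le> y \<Longrightarrow> g y \<le> g x"
    and t: "t \<in> ivl R"
  shows "rearr R g t \<le> g t"
proof (rule dense_ge)
  fix lam assume lam: "g t < lam"
  have "{x \<in> ivl R. g x > lam} \<subseteq> {0<..<t}"
  proof
    fix x assume x: "x \<in> {x \<in> ivl R. g x > lam}"
    have "x < t"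
    proof (rule ccontr)
      assume "\<not> x < t"
      then have "g x \<le> g t" using anti[of t x] x t by auto
      then show False using x lam by auto
    qed
    then show "x \<in> {0<..<t}" using x by (auto simp: ivl_def)
  qed
  then have "distf R g lam \<le> emeasure lebesgue {0<..<t}"
    unfolding distf_def by (rule emeasure_mono) simp_all
  also have "\<dots> = ennreal t" using t by (simp add: emeas_leb_Ioo ivl_def)
  finally have d: "distf R g lam \<le> ennreal t" .
  have "0 < lam" using lam by (metis le_less_trans zero_le)
  with d have "lam \<in> {lam. 0 < lam \<and> distf R g lam \<le> ennreal t}" by simp
  then show "rearr R g t \<le> lam" unfolding rearr_def by (rule Inf_lower)
qed

lemma rearr_lower:
  assumes "\<And>lam. 0 < lam \<Longrightarrow> lam < v \<Longrightarrow> ennreal s < distf R g lam"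
  shows "v \<le> rearr R g s"
  unfolding rearr_def
proof (rule Inf_greatest)
  fix lam assume "lam \<in> {lam. 0 < lam \<and> distf R g lam \<le> ennreal s}"
  then have "0 < lam" "distf R g lam \<le> ennreal s" by auto
  then show "v \<le> lam" using assms[of lam] by (metis not_le)
qed

lemma ivl_sub: "t \<in> ivl R \<Longrightarrow> {0<..<t} \<subseteq> ivl R"
  unfolding ivl_def by (auto intro: ereal_lt_mono[of _ t] less_imp_le)

lemma ivl_sub': "t \<in> ivl R \<Longrightarrow> 0 < s \<Longrightarrow> s \<le> t \<Longrightarrow> s \<in> ivl R"
  unfolding ivl_def by (auto intro: ereal_lt_mono[of _ t])

lemma Tpsi_le_M:
  assumes q: "quasiconcave_fn R psi" and t: "t \<in> ivl R"
  shows "Tpsi psi R g t \<le> Mnorm psi R g * ennreal (1 / psi t)"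
proof -
  have "(SUP s \<in> {s. t < s \<and> ereal s < R}. ennreal (psi s) * rearr R g s) \<le> Mnorm psi R g"
  proof (rule SUP_least)
    fix s assume s: "s \<in> {s. t < s \<and> ereal s < R}"
    then have sI: "s \<in> ivl R" using t by (auto simp: ivl_def)
    then have "ennreal (psi s) * rearr R g s \<le> ennreal (psi s) * dblstar R g s"
      by (intro mult_left_mono rearr_le_dblstar) (auto simp: ivl_def)
    also have "\<dots> \<le> Mnorm psi R g" unfolding Mnorm_def using sI by (rule SUP_upper)
    finally show "ennreal (psi s) * rearr R g s \<le> Mnorm psi R g" .
  qed
  then show ?thesis unfolding Tpsi_def using qc_pos[OF q t]
    by (simp add: div_as_mult mult_right_mono)
qed

lemma partii_suff:
  assumes q: "quasiconcave_fn R psi" and B: "B_condition R psi"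
  shows "\<exists>C::real. \<forall>g. Mnorm psi R (Tpsi psi R g) \<le> ennreal C * Mnorm psi R g"
proof -
  obtain C where C: "C > 0" and CB: "\<And>t. t \<in> ivl R \<Longrightarrow>
     ennreal (1 / t) * (\<integral>\<^sup>+ s \<in> {0<..<t}. ennreal (1 / psi s) \<partial>lborel) \<le> ennreal (C / psi t)"
    using B unfolding B_condition_def by blast
  show ?thesis
  proof (intro exI allI)
    fix g
    define M where "M = Mnorm psi R g"
    let ?T = "Tpsi psi R g"
    have anti: "\<And>x y. x \<in> ivl R \<Longrightarrow> y \<in> ivl R \<Longrightarrow> x \<le> y \<Longrightarrow> ?T y \<le> ?T x"
      using Tpsi_antitone[OF q] by blast
    show "Mnorm psi R ?T \<le> ennreal C * Mnorm psi R g"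
      unfolding Mnorm_def[of psi R ?T]
    proof (rule SUP_least)
      fix t assume t: "t \<in> ivl R"
      have pt: "psi t > 0" using qc_pos[OF q t] .
      have "(\<integral>\<^sup>+ s. rearr R ?T s * indicator {0<..<t} s \<partial>lborel)
            \<le> (\<integral>\<^sup>+ s. M * (ennreal (1/psi s) * indicator {0<..<t} s) \<partial>lborel)"
      proof (intro nn_integral_mono)
        fix s
        show "rearr R ?T s * indicator {0<..<t} s \<le> M * (ennreal (1/psi s) * indicator {0<..<t} s)"
        proof (cases "s \<in> {0<..<t}")
          case True
          then have sI: "s \<in> ivl R" using ivl_sub[OF t] by auto
          have "rearr R ?T s \<le> ?T s" by (rule rearr_le_antitone[OF anti sI])
          also have "\<dots> \<le> M * ennreal (1 / psi s)" unfolding M_def by (rule Tpsi_le_M[OF q sI])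
          finally show ?thesis using True by simp
        qed simp
      qed
      also have "\<dots> = M * (\<integral>\<^sup>+ s. ennreal (1/psi s) * indicator {0<..<t} s \<partial>lborel)"
        by (rule nn_integral_cmult) (use wmeas2[OF q ivl_sub[OF t]] in simp)
      finally have I: "(\<integral>\<^sup>+ s. rearr R ?T s * indicator {0<..<t} s \<partial>lborel) \<le> M * (\<integral>\<^sup>+ s. ennreal (1/psi s) * indicator {0<..<t} s \<partial>lborel)" .
      have "ennreal (psi t) * dblstar R ?T t \<le> ennreal (psi t) * (ennreal (1/t) * (M * (\<integral>\<^sup>+ s. ennreal (1/psi s) * indicator {0<..<t} s \<partial>lborel)))"
        unfolding dblstar_def by (intro mult_left_mono I) auto
      also have "\<dots> = M * (ennreal (psi t) * (ennreal (1/t) * (\<integral>\<^sup>+ s. ennreal (1/psi s) * indicator {0<..<t} s \<partial>lborel)))"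
        by (simp add: ac_simps)
      also have "\<dots> \<le> M * (ennreal (psi t) * ennreal (C / psi t))"
        by (intro mult_left_mono CB[OF t]) auto
      also have "ennreal (psi t) * ennreal (C / psi t) = ennreal C"
        using pt C by (simp flip: ennreal_mult)
      finally show "ennreal (psi t) * dblstar R ?T t \<le> ennreal C * Mnorm psi R g"
        by (simp add: M_def mult.commute)
    qed
  qed
qed

lemma ind_simp: "(\<lambda>x. ennreal \<bar>indicator A x :: real\<bar>) = (indicator A :: real \<Rightarrow> ennreal)"
  by (auto simp: indicator_def)

lemma ind_set: "b \<in> ivl R \<Longrightarrow> 0 \<le> lam \<Longrightarrow> lam < 1 \<Longrightarrow>
    {x \<in> ivl R. lam < (indicator {0<..<b} x :: ennreal)} = {0<..<b}"
  using ivl_sub[of b R] by (auto simp: indicator_def)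

lemma ind_rearr_ge1:
  assumes b: "b \<in> ivl R" and s: "s < b"
  shows "1 \<le> rearr R (indicator {0<..<b}) s"
proof (rule rearr_lower)
  fix lam :: ennreal assume "0 < lam" "lam < 1"
  then have "distf R (indicator {0<..<b}) lam = ennreal b"
    using b unfolding distf_def by (subst ind_set) (auto simp: emeas_leb_Ioo ivl_def)
  then show "ennreal s < distf R (indicator {0<..<b}) lam"
    using s b by (auto simp: ivl_def ennreal_lessI)
qed

lemma ind_rearr_le1: "0 \<le> u \<Longrightarrow> rearr R (indicator {0<..<b}) u \<le> 1"
  unfolding rearr_def
proof (rule Inf_lower)
  have "{x \<in> ivl R. 1 < (indicator {0<..<b} x :: ennreal)} = {}" by (auto simp: indicator_def)
  then have "distf R (indicator {0<..<b}) 1 = 0" unfolding distf_def by (metis emeasure_empty)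
  then show "1 \<in> {lam. 0 < lam \<and> distf R (indicator {0<..<b}) lam \<le> ennreal u}"
    by simp
qed

lemma ind_rearr_0:
  assumes "b \<le> u" "0 \<le> b"
  shows "rearr R (indicator {0<..<b}) u = 0"
proof -
  have "{lam. 0 < lam \<and> distf R (indicator {0<..<b}) lam \<le> ennreal u} = {0<..}"
  proof safe
    fix lam :: ennreal assume "0 < lam"
    have "{x \<in> ivl R. lam < (indicator {0<..<b} x :: ennreal)} \<subseteq> {0<..<b}"
      using \<open>0 < lam\<close> by (auto simp: indicator_def split: if_splits)
    then have "distf R (indicator {0<..<b}) lam \<le> emeasure lebesgue {0<..<b}"
      unfolding distf_def by (rule emeasure_mono) simp
    also have "\<dots> = ennreal b" using assms by (simp add: emeas_leb_Ioo)
    also have "\<dots> \<le> ennreal u" using assms by (simp add: ennreal_leI)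
    finally show "distf R (indicator {0<..<b}) lam \<le> ennreal u" .
  qed
  then show ?thesis unfolding rearr_def by simp
qed

lemma ind_L1: "b \<in> ivl R \<Longrightarrow> L1norm R (indicator {0<..<b}) = ennreal b"
proof -
  assume b: "b \<in> ivl R"
  have "(\<lambda>x. (indicator {0<..<b} x :: ennreal) * indicator (ivl R) x) = indicator {0<..<b}"
  proof (rule ext)
    fix x show "(indicator {0<..<b} x :: ennreal) * indicator (ivl R) x = indicator {0<..<b} x"
      using ivl_sub[OF b] by (cases "x \<in> {0<..<b}") auto
  qed
  then show ?thesis unfolding L1norm_def using b
    by (simp add: emeas_leb_Ioo ivl_def)
qed

lemma ind_Mnorm:
  assumes q: "quasiconcave_fn R psi" and b: "b \<in> ivl R"
  shows "Mnorm psi R (indicator {0<..<b}) \<le> ennreal (psi b)"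
  unfolding Mnorm_def
proof (rule SUP_least)
  fix s assume s: "s \<in> ivl R"
  have s0: "s > 0" "b > 0" using s b by (auto simp: ivl_def)
  have "(\<integral>\<^sup>+ u. rearr R (indicator {0<..<b}) u * indicator {0<..<s} u \<partial>lborel)
        \<le> (\<integral>\<^sup>+ u. indicator {0<..<min s b} u \<partial>lborel)"
  proof (intro nn_integral_mono)
    fix u
    show "rearr R (indicator {0<..<b}) u * indicator {0<..<s} u \<le> indicator {0<..<min s b} u"
    proof (cases "u \<in> {0<..<s}")
      case True
      show ?thesis
      proof (cases "u < b")
        case True
        then show ?thesis using \<open>u \<in> {0<..<s}\<close> ind_rearr_le1[of u R b] by (auto simp: indicator_def)
      next
        case False
        then show ?thesis using \<open>u \<in> {0<..<s}\<close> ind_rearr_0[of b u R] s0 by auto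
      qed
    qed simp
  qed
  also have "\<dots> = ennreal (min s b)" using s0 by simp
  finally have I: "(\<integral>\<^sup>+ u. rearr R (indicator {0<..<b}) u * indicator {0<..<s} u \<partial>lborel) \<le> ennreal (min s b)" .
  have "ennreal (psi s) * dblstar R (indicator {0<..<b}) s \<le> ennreal (psi s) * (ennreal (1/s) * ennreal (min s b))"
    unfolding dblstar_def by (intro mult_left_mono I) auto
  also have "\<dots> = ennreal (psi s * (1/s) * min s b)"
  proof -
    have p: "psi s > 0" using qc_pos[OF q s] .
    have e1: "ennreal (psi s * (1/s) * min s b) = ennreal (psi s * (1/s)) * ennreal (min s b)"
      by (rule ennreal_mult) (use s0 p in auto)
    have e2: "ennreal (psi s * (1/s)) = ennreal (psi s) * ennreal (1/s)"
      by (rule ennreal_mult) (use s0 p in auto)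
    show ?thesis unfolding e1 e2 by (simp add: mult.assoc)
  qed
  also have "\<dots> \<le> ennreal (psi b)"
  proof (rule ennreal_leI)
    show "psi s * (1/s) * min s b \<le> psi b"
    proof (cases "s \<le> b")
      case True
      then have "psi s \<le> psi b" using qc_mono[OF q, of s b] s0 b by (auto simp: ivl_def)
      then show ?thesis using True s0 by (simp add: min_def)
    next
      case False
      then have "psi s * b \<le> psi b * s" using qc_ratio[OF q, of b s] s0 s by (auto simp: ivl_def)
      then show ?thesis using False s0 by (simp add: min_def field_simps)
    qed
  qed
  finally show "ennreal (psi s) * dblstar R (indicator {0<..<b}) s \<le> ennreal (psi b)" .
qed

lemma ind_T_lower:
  assumes q: "quasiconcave_fn R psi" and b: "b \<in> ivl R" and a: "a \<in> ivl R" "a < b"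
    and t: "0 < t" "t < a"
  shows "ennreal (psi a / psi t) \<le> Tpsi psi R (indicator {0<..<b}) t"
proof -
  have tI: "t \<in> ivl R" using ivl_sub'[OF a(1) t(1)] t by simp
  have "ennreal (psi a) * 1 \<le> ennreal (psi a) * rearr R (indicator {0<..<b}) a"
    by (intro mult_left_mono ind_rearr_ge1[OF b a(2)]) auto
  also have "\<dots> \<le> (SUP s \<in> {s. t < s \<and> ereal s < R}. ennreal (psi s) * rearr R (indicator {0<..<b}) s)"
    by (rule SUP_upper) (use a t in \<open>auto simp: ivl_def\<close>)
  finally have "ennreal (psi a) * ennreal (1 / psi t) \<le> Tpsi psi R (indicator {0<..<b}) t"
    unfolding Tpsi_def using qc_pos[OF q tI] by (simp add: div_as_mult mult_right_mono)
  then show ?thesis using qc_pos[OF q tI] qc_pos[OF q a(1)] by (simp flip: ennreal_mult)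
qed

lemma B_from:
  assumes a: "0 < a" and p: "0 < p" and C: "0 < C" and ab0: "a < b0"
    and h: "\<And>b. a < b \<Longrightarrow> b < b0 \<Longrightarrow> ennreal p * X \<le> ennreal (C * b)"
  shows "ennreal (1/a) * X \<le> ennreal (C / p)"
proof -
  have "ennreal p * X \<le> ennreal (C * ((a+b0)/2))" by (rule h) (use ab0 in auto)
  then have "ennreal p * X < top" by (rule le_less_trans[OF _ ennreal_less_top])
  then have "X \<noteq> top" using p by (auto simp: ennreal_mult_eq_top_iff)
  then obtain x where X: "X = ennreal x" "0 \<le> x" by (cases X) auto
  have "p * x / C \<le> a"
  proof (rule dense_ge_bounded[OF ab0])
    fix b assume "a < b" "b < b0"
    have "ennreal p * X \<le> ennreal (C * b)" by (rule h) fact+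
    moreover have "ennreal p * X = ennreal (p * x)" using X p by (simp add: ennreal_mult)
    ultimately have "ennreal (p * x) \<le> ennreal (C * b)" by simp
    moreover have "0 \<le> C * b" using C a \<open>a < b\<close> by simp
    ultimately have "p * x \<le> C * b" by (simp add: ennreal_le_iff)
    then show "p * x / C \<le> b" using C by (simp add: divide_simps mult.commute)
  qed
  then have "x / a \<le> C / p" using a p C by (simp add: divide_simps mult.commute)
  moreover have "ennreal (1/a) * X = ennreal (x / a)" using X a by (simp flip: ennreal_mult)
  ultimately show ?thesis by (simp add: ennreal_leI)
qed

lemma partI_nec:
  assumes q: "quasiconcave_fn R psi"
    and hyp: "\<exists>C::real. \<forall>f::real \<Rightarrow> real. f \<in> borel_measurable lebesgue \<longrightarrow>
              L1norm R (\<lambda>x. ennreal \<bar>f x\<bar>) < \<infinity> \<longrightarrow>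
              L1norm R (Tpsi psi R (\<lambda>x. ennreal \<bar>f x\<bar>)) \<le> ennreal C * L1norm R (\<lambda>x. ennreal \<bar>f x\<bar>)"
  shows "B_condition R psi"
proof -
  obtain C0 where C0: "\<And>f::real \<Rightarrow> real. f \<in> borel_measurable lebesgue \<Longrightarrow>
              L1norm R (\<lambda>x. ennreal \<bar>f x\<bar>) < \<infinity> \<Longrightarrow>
              L1norm R (Tpsi psi R (\<lambda>x. ennreal \<bar>f x\<bar>)) \<le> ennreal C0 * L1norm R (\<lambda>x. ennreal \<bar>f x\<bar>)"
    using hyp by blast
  define C where "C = max C0 1"
  have C: "C > 0" by (simp add: C_def)
  show ?thesis unfolding B_condition_def
  proof (intro exI conjI ballI)
    show "C > 0" by (fact C)
    fix a assume a: "a \<in> ivl R"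
    have a0: "0 < a" and aR: "ereal a < R" using a by (auto simp: ivl_def)
    have pa: "psi a > 0" using qc_pos[OF q a] .
    obtain b0 where b0: "a < b0" "ereal b0 < R" using ereal_dense2[OF aR] by auto
    show "ennreal (1 / a) * (\<integral>\<^sup>+ s \<in> {0<..<a}. ennreal (1 / psi s) \<partial>lborel) \<le> ennreal (C / psi a)"
    proof (rule B_from[OF a0 pa C b0(1)])
      fix b assume ab: "a < b" "b < b0"
      have "ereal b < R" using ab b0 ereal_lt_mono[of b b0 R] by auto
      then have b: "b \<in> ivl R" using ab a0 by (auto simp: ivl_def)
      let ?f = "indicator {0<..<b} :: real \<Rightarrow> real"
      have fm: "?f \<in> borel_measurable lebesgue" by (intro borel_measurable_indicator) auto
      have L: "L1norm R (\<lambda>x. ennreal \<bar>?f x\<bar>) = ennreal b" unfolding ind_simp by (rule ind_L1[OF b])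
      have up: "L1norm R (Tpsi psi R (indicator {0<..<b})) \<le> ennreal C * ennreal b"
      proof -
        have "L1norm R (Tpsi psi R (indicator {0<..<b})) \<le> ennreal C0 * ennreal b"
          using C0[OF fm] L unfolding ind_simp by simp
        also have "\<dots> \<le> ennreal C * ennreal b" by (intro mult_right_mono ennreal_leI) (auto simp: C_def)
        finally show ?thesis .
      qed
      have "(\<integral>\<^sup>+ s. ennreal (psi a) * (ennreal (1 / psi s) * indicator {0<..<a} s) \<partial>lborel)
          \<le> (\<integral>\<^sup>+ s. Tpsi psi R (indicator {0<..<b}) s * indicator (ivl R) s \<partial>lborel)"
      proof (intro nn_integral_mono)
        fix s
        show "ennreal (psi a) * (ennreal (1 / psi s) * indicator {0<..<a} s) \<le> Tpsi psi R (indicator {0<..<b}) s * indicator (ivl R) s"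
        proof (cases "s \<in> {0<..<a}")
          case True
          then have sI: "s \<in> ivl R" using ivl_sub[OF a] by auto
          have "ennreal (psi a) * ennreal (1 / psi s) = ennreal (psi a / psi s)"
            by (subst ennreal_mult[symmetric]) (use pa qc_pos[OF q sI] in auto)
          then show ?thesis using True sI ind_T_lower[OF q b a ab(1), of s] by auto
        qed simp
      qed
      also have "\<dots> = L1norm R (Tpsi psi R (indicator {0<..<b}))"
        unfolding L1norm_def by (simp add: nn_integral_completion)
      finally have "ennreal (psi a) * (\<integral>\<^sup>+ s. ennreal (1 / psi s) * indicator {0<..<a} s \<partial>lborel) \<le> ennreal C * ennreal b"
        using up by (subst (asm) nn_integral_cmult) (use wmeas2[OF q ivl_sub[OF a]] in auto)
      then show "ennreal (psi a) * (\<integral>\<^sup>+ s \<in> {0<..<a}. ennreal (1 / psi s) \<partial>lborel) \<le> ennreal (C * b)"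
        using C a0 ab by (simp add: ennreal_mult)
    qed
  qed
qed

lemma cancel_k:
  assumes k: "0 < k" and z: "0 \<le> z" and h: "ennreal k * Y \<le> ennreal (k * z)"
  shows "Y \<le> ennreal z"
proof -
  have "Y = ennreal (1/k) * (ennreal k * Y)"
    using k by (simp add: mult.assoc[symmetric] ennreal_mult[symmetric])
  also have "\<dots> \<le> ennreal (1/k) * ennreal (k * z)" by (intro mult_left_mono h) auto
  also have "\<dots> = ennreal z" using k z by (simp flip: ennreal_mult)
  finally show ?thesis .
qed

lemma exists_tp:
  fixes s a l :: real
  assumes s: "0 < s" "s < a" and l: "0 < l" "l * psi s < psi a" and ps: "psi s > 0"
    and rat: "\<And>t. s \<le> t \<Longrightarrow> t < a \<Longrightarrow> psi t * s \<le> psi s * t"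
  shows "\<exists>t. s < t \<and> t < a \<and> l * psi t < psi a"
proof -
  define r where "r = s * psi a / (l * psi s)"
  have "s < r" unfolding r_def using s l ps by (simp add: field_simps)
  define t where "t = min ((s+a)/2) ((s+r)/2)"
  have t: "s < t" "t < a" "t < r" using s \<open>s < r\<close> by (auto simp: t_def min_def)
  have "psi t * s \<le> psi s * t" using rat t by simp
  then have "l * psi t * s \<le> l * psi s * t" using l by (simp add: mult.assoc mult_left_mono)
  also have "\<dots> < l * psi s * r" using t l ps by simp
  also have "\<dots> = psi a * s" unfolding r_def using l ps by (simp add: field_simps)
  finally have "l * psi t < psi a" using s by simp
  then show ?thesis using t by blast
qed

lemma ind_T_rearr_lower:
  assumes q: "quasiconcave_fn R psi" and b: "b \<in> ivl R" and a: "a \<in> ivl R" "a < b"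
    and s: "0 < s" "s < a"
  shows "ennreal (psi a / psi s) \<le> rearr R (Tpsi psi R (indicator {0<..<b})) s"
proof (rule rearr_lower)
  let ?T = "Tpsi psi R (indicator {0<..<b})"
  fix lam :: ennreal assume lam: "0 < lam" "lam < ennreal (psi a / psi s)"
  have sI: "s \<in> ivl R" using ivl_sub'[OF a(1) s(1)] s by simp
  have ps: "psi s > 0" using qc_pos[OF q sI] .
  have pa: "psi a > 0" using qc_pos[OF q a(1)] .
  obtain l where l: "lam = ennreal l" "0 \<le> l" using lam by (cases lam) auto
  have l0: "0 < l" using lam l by auto
  have "l < psi a / psi s" using lam l ps pa by (simp add: ennreal_less_iff)
  then have "l * psi s < psi a" using ps by (simp add: field_simps)
  moreover have rat: "\<And>t. s \<le> t \<Longrightarrow> t < a \<Longrightarrow> psi t * s \<le> psi s * t"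
  proof -
    fix t assume "s \<le> t" "t < a"
    moreover have "ereal t < R" using a(1) \<open>t < a\<close> ereal_lt_mono[of t a R] by (auto simp: ivl_def)
    ultimately show "psi t * s \<le> psi s * t" using qc_ratio[OF q s(1)] by blast
  qed
  ultimately obtain t where t: "s < t" "t < a" "l * psi t < psi a"
    using exists_tp[of s a l psi] s l0 ps by blast
  have tI: "t \<in> ivl R" using ivl_sub'[OF a(1), of t] t s by simp
  have pt: "psi t > 0" using qc_pos[OF q tI] .
  have sub: "{0<..t} \<subseteq> {x \<in> ivl R. lam < ?T x}"
  proof
    fix x assume x: "x \<in> {0<..t}"
    then have xI: "x \<in> ivl R" using ivl_sub'[OF tI, of x] by auto
    have px: "psi x > 0" using qc_pos[OF q xI] .
    have "psi x \<le> psi t" using qc_mono[OF q, of x t] x tI by (auto simp: ivl_def)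
    then have "psi a / psi t \<le> psi a / psi x" using px pa by (intro divide_left_mono) auto
    moreover have "l < psi a / psi t" using t pt by (simp add: field_simps)
    ultimately have "ennreal l < ennreal (psi a / psi x)" using l0 by (simp add: ennreal_less_iff)
    also have "\<dots> \<le> ?T x" using ind_T_lower[OF q b a, of x] x t by auto
    finally show "x \<in> {x \<in> ivl R. lam < ?T x}" using xI l by simp
  qed
  have "ennreal s < ennreal t" using t s by (simp add: ennreal_lessI)
  also have "\<dots> = emeasure lebesgue {0<..t}" using t s by (simp add: emeas_leb_Ioc)
  also have "\<dots> \<le> distf R ?T lam" unfolding distf_def
    by (rule emeasure_mono[OF sub]) (use Tpsi_set_borel[OF q] in auto)
  finally show "ennreal s < distf R ?T lam" .
qed

lemma partII_nec:
  assumes q: "quasiconcave_fn R psi"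
    and hyp: "\<exists>C::real. \<forall>f::real \<Rightarrow> real. f \<in> borel_measurable lebesgue \<longrightarrow>
              Mnorm psi R (\<lambda>x. ennreal \<bar>f x\<bar>) < \<infinity> \<longrightarrow>
              Mnorm psi R (Tpsi psi R (\<lambda>x. ennreal \<bar>f x\<bar>)) \<le> ennreal C * Mnorm psi R (\<lambda>x. ennreal \<bar>f x\<bar>)"
  shows "B_condition R psi"
proof -
  obtain C0 where C0: "\<And>f::real \<Rightarrow> real. f \<in> borel_measurable lebesgue \<Longrightarrow>
              Mnorm psi R (\<lambda>x. ennreal \<bar>f x\<bar>) < \<infinity> \<Longrightarrow>
              Mnorm psi R (Tpsi psi R (\<lambda>x. ennreal \<bar>f x\<bar>)) \<le> ennreal C0 * Mnorm psi R (\<lambda>x. ennreal \<bar>f x\<bar>)"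
    using hyp by blast
  define C where "C = max C0 1"
  have C: "C > 0" by (simp add: C_def)
  show ?thesis unfolding B_condition_def
  proof (intro exI conjI ballI)
    show "C > 0" by (fact C)
    fix a assume a: "a \<in> ivl R"
    have a0: "0 < a" and aR: "ereal a < R" using a by (auto simp: ivl_def)
    have pa: "psi a > 0" using qc_pos[OF q a] .
    obtain b0 where b0: "a < b0" "ereal b0 < R" using ereal_dense2[OF aR] by auto
    show "ennreal (1 / a) * (\<integral>\<^sup>+ s \<in> {0<..<a}. ennreal (1 / psi s) \<partial>lborel) \<le> ennreal (C / psi a)"
    proof (rule B_from[OF a0 pa C b0(1)])
      fix b assume ab: "a < b" "b < b0"
      have "ereal b < R" using ab b0 ereal_lt_mono[of b b0 R] by auto
      then have b: "b \<in> ivl R" using ab a0 by (auto simp: ivl_def)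
      let ?f = "indicator {0<..<b} :: real \<Rightarrow> real"
      let ?T = "Tpsi psi R (indicator {0<..<b})"
      let ?X = "\<integral>\<^sup>+ s. ennreal (1 / psi s) * indicator {0<..<a} s \<partial>lborel"
      have fm: "?f \<in> borel_measurable lebesgue" by (intro borel_measurable_indicator) auto
      have Mf: "Mnorm psi R (indicator {0<..<b}) \<le> ennreal (psi b)" by (rule ind_Mnorm[OF q b])
      have "psi b * a \<le> psi a * b" using qc_ratio[OF q a0, of b] ab b by (auto simp: ivl_def)
      then have pb: "psi b \<le> psi a / a * b" using a0 by (simp add: field_simps)
      have up: "Mnorm psi R ?T \<le> ennreal (psi a / a * (C * b))"
      proof -
        have "Mnorm psi R ?T \<le> ennreal C0 * Mnorm psi R (indicator {0<..<b})"
          using C0[OF fm] Mf unfolding ind_simp by (simp add: le_less_trans)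
        also have "\<dots> \<le> ennreal C * ennreal (psi b)"
          by (intro mult_mono Mf ennreal_leI) (auto simp: C_def)
        also have "\<dots> = ennreal (C * psi b)" using C qc_pos[OF q b] by (simp add: ennreal_mult)
        also have "\<dots> \<le> ennreal (psi a / a * (C * b))"
        proof (rule ennreal_leI)
          have "C * psi b \<le> C * (psi a / a * b)" using pb C by (intro mult_left_mono) auto
          then show "C * psi b \<le> psi a / a * (C * b)" by (simp add: ac_simps)
        qed
        finally show ?thesis .
      qed
      have "(\<integral>\<^sup>+ s. ennreal (psi a) * (ennreal (1 / psi s) * indicator {0<..<a} s) \<partial>lborel)
          \<le> (\<integral>\<^sup>+ s. rearr R ?T s * indicator {0<..<a} s \<partial>lborel)"
      proof (intro nn_integral_mono)
        fix s
        show "ennreal (psi a) * (ennreal (1 / psi s) * indicator {0<..<a} s) \<le> rearr R ?T s * indicator {0<..<a} s"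
        proof (cases "s \<in> {0<..<a}")
          case True
          then have sI: "s \<in> ivl R" using ivl_sub[OF a] by auto
          have "ennreal (psi a) * ennreal (1 / psi s) = ennreal (psi a / psi s)"
            by (subst ennreal_mult[symmetric]) (use pa qc_pos[OF q sI] in auto)
          then show ?thesis using True ind_T_rearr_lower[OF q b a ab(1), of s] by auto
        qed simp
      qed
      then have "ennreal (psi a) * ?X \<le> (\<integral>\<^sup>+ s. rearr R ?T s * indicator {0<..<a} s \<partial>lborel)"
        by (subst (asm) nn_integral_cmult) (use wmeas2[OF q ivl_sub[OF a]] in auto)
      then have "ennreal (psi a) * (ennreal (1/a) * (ennreal (psi a) * ?X)) \<le> ennreal (psi a) * dblstar R ?T a"
        unfolding dblstar_def by (intro mult_left_mono) (auto simp: ac_simps)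
      also have "\<dots> \<le> Mnorm psi R ?T" unfolding Mnorm_def using a by (rule SUP_upper)
      also have "\<dots> \<le> ennreal (psi a / a * (C * b))" by (fact up)
      finally have L: "ennreal (psi a) * (ennreal (1/a) * (ennreal (psi a) * ?X)) \<le> ennreal (psi a / a * (C * b))" .
      have "ennreal (psi a) * (ennreal (1/a) * (ennreal (psi a) * ?X)) = ennreal (psi a / a) * (ennreal (psi a) * ?X)"
      proof -
        have "ennreal (psi a / a) = ennreal (psi a) * ennreal (1/a)"
          using pa a0 by (subst ennreal_mult[symmetric]) auto
        then show ?thesis by (simp add: mult.assoc)
      qed
      with L have "ennreal (psi a / a) * (ennreal (psi a) * ?X) \<le> ennreal (psi a / a * (C * b))" by simp
      then have "ennreal (psi a) * ?X \<le> ennreal (C * b)"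
        by (rule cancel_k[rotated 2]) (use pa a0 C ab in auto)
      then show "ennreal (psi a) * (\<integral>\<^sup>+ s \<in> {0<..<a}. ennreal (1 / psi s) \<partial>lborel) \<le> ennreal (C * b)"
        by simp
    qed
  qed
qed

lemma sigma_finite_lebesgue: "sigma_finite_measure (lebesgue :: real measure)"
proof
  obtain A :: "real set set" where A: "countable A" "A \<subseteq> sets lborel" "\<Union> A = space lborel"
    "\<forall>a\<in>A. emeasure lborel a \<noteq> \<infinity>"
    using lborel.sigma_finite_countable by blast
  show "\<exists>A. countable A \<and> A \<subseteq> sets (lebesgue :: real measure) \<and> \<Union> A = space lebesgue \<and> (\<forall>a\<in>A. emeasure lebesgue a \<noteq> \<infinity>)"
    using A by (intro exI[of _ A]) (auto simp: emeas_leb)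
qed

context
  fixes R :: ereal and psi :: "real \<Rightarrow> real" and f :: "real \<Rightarrow> real"
  assumes q: "quasiconcave_fn R psi" and fm: "f \<in> borel_measurable lebesgue"
begin

definition "gg = (\<lambda>x. ennreal \<bar>f x\<bar>)"
definition "dd y = distf R gg (ennreal y)"
definition "KK y = (SUP u \<in> {u. 0 < u \<and> ereal u < R \<and> ennreal u < dd y}. ennreal (psi u))"
definition "ww t = ennreal (1 / psi t) * indicator (ivl R) t"

lemma gg_meas[measurable]: "gg \<in> borel_measurable lebesgue"
  unfolding gg_def using fm by measurable

lemma dd_antitone: "y1 \<le> y2 \<Longrightarrow> dd y2 \<le> dd y1"
  unfolding dd_def distf_def
proof (rule emeasure_mono)
  assume "y1 \<le> y2"
  then show "{x \<in> ivl R. ennreal y2 < gg x} \<subseteq> {x \<in> ivl R. ennreal y1 < gg x}"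
    by (auto intro: le_less_trans ennreal_leI)
  have "{x \<in> ivl R. ennreal y1 < gg x} = ivl R \<inter> {x \<in> space lebesgue. ennreal y1 < gg x}" by auto
  also have "\<dots> \<in> sets lebesgue" using ivl_lebesgue by measurable
  finally show "{x \<in> ivl R. ennreal y1 < gg x} \<in> sets lebesgue" .
qed

lemma dd_meas[measurable]: "dd \<in> borel_measurable borel"
  by (rule antitone_meas) (rule dd_antitone)

lemma KK_meas[measurable]: "KK \<in> borel_measurable borel"
proof (rule antitone_meas)
  fix x y :: real assume "x \<le> y"
  then show "KK y \<le> KK x" unfolding KK_def
    by (intro SUP_subset_mono) (auto intro: less_le_trans dd_antitone)
qed

lemma ww_meas[measurable]: "ww \<in> borel_measurable borel"
  unfolding ww_def using wmeas[OF q] .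

lemma stepA: "rearr R gg s \<le> (\<integral>\<^sup>+ y. indicator {0<..} y * indicator {y. ennreal s < dd y} y \<partial>lborel)"
proof (rule dense_le)
  fix z assume z: "z < rearr R gg s"
  then obtain r where r: "z = ennreal r" "0 \<le> r" by (cases z) auto
  show "z \<le> (\<integral>\<^sup>+ y. indicator {0<..} y * indicator {y. ennreal s < dd y} y \<partial>lborel)"
  proof -
    have "(\<integral>\<^sup>+ y. indicator {0<..<r} y \<partial>lborel) \<le> (\<integral>\<^sup>+ y. indicator {0<..} y * indicator {y. ennreal s < dd y} y \<partial>lborel)"
    proof (intro nn_integral_mono)
      fix y
      show "(indicator {0<..<r} y :: ennreal) \<le> indicator {0<..} y * indicator {y. ennreal s < dd y} y"
      proof (cases "y \<in> {0<..<r}")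
        case True
        have "ennreal s < dd y"
        proof (rule ccontr)
          assume "\<not> ennreal s < dd y"
          then have "ennreal y \<in> {lam. 0 < lam \<and> distf R gg lam \<le> ennreal s}"
            using True by (auto simp: dd_def not_less)
          then have "rearr R gg s \<le> ennreal y" unfolding rearr_def by (rule Inf_lower)
          moreover have "ennreal y < z" using True r by (auto simp: ennreal_lessI)
          ultimately show False using z by simp
        qed
        then show ?thesis using True by simp
      qed simp
    qed
    then show ?thesis using r by simp
  qed
qed

definition "GG t = (\<integral>\<^sup>+ y. KK y * indicator {0<..} y * indicator {y. ennreal t < dd y} y \<partial>lborel)"

lemma stepB:
  assumes t: "t \<in> ivl R"
  shows "Tpsi psi R gg t \<le> GG t * ennreal (1 / psi t)"
proof -
  have "(SUP s \<in> {s. t < s \<and> ereal s < R}. ennreal (psi s) * rearr R gg s) \<le> GG t"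
  proof (rule SUP_least)
    fix s assume s: "s \<in> {s. t < s \<and> ereal s < R}"
    have s0: "0 < s" using s t by (auto simp: ivl_def)
    have "ennreal (psi s) * rearr R gg s \<le> ennreal (psi s) * (\<integral>\<^sup>+ y. indicator {0<..} y * indicator {y. ennreal s < dd y} y \<partial>lborel)"
      by (intro mult_left_mono stepA) auto
    also have "\<dots> = (\<integral>\<^sup>+ y. ennreal (psi s) * (indicator {0<..} y * indicator {y. ennreal s < dd y} y) \<partial>lborel)"
      by (rule nn_integral_cmult[symmetric]) measurable
    also have "\<dots> \<le> GG t" unfolding GG_def
    proof (intro nn_integral_mono)
      fix y
      show "ennreal (psi s) * (indicator {0<..} y * indicator {y. ennreal s < dd y} y) \<le> KK y * indicator {0<..} y * indicator {y. ennreal t < dd y} y"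
      proof (cases "0 < y \<and> ennreal s < dd y")
        case True
        have "ennreal (psi s) \<le> KK y" unfolding KK_def
          by (rule SUP_upper) (use True s s0 in auto)
        moreover have "ennreal t < dd y" using True s t
          by (metis ennreal_lessI le_less_trans less_imp_le mem_Collect_eq s0)
        ultimately show ?thesis using True by simp
      qed auto
    qed
    finally show "ennreal (psi s) * rearr R gg s \<le> GG t" .
  qed
  then show ?thesis unfolding Tpsi_def using qc_pos[OF q t]
    by (simp add: div_as_mult mult_right_mono)
qed

lemma stepE:
  assumes C: "C > 0" and CB: "\<And>t. t \<in> ivl R \<Longrightarrow>
     ennreal (1 / t) * (\<integral>\<^sup>+ s \<in> {0<..<t}. ennreal (1 / psi s) \<partial>lborel) \<le> ennreal (C / psi t)"
  shows "KK y * (\<integral>\<^sup>+ t. indicator {t. ennreal t < dd y} t * ww t \<partial>lborel) \<le> ennreal (max C 1) * dd y"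
proof (cases "dd y = top")
  case True
  then show ?thesis using C by (simp add: ennreal_mult_top)
next
  case False
  then obtain \<delta> where D: "dd y = ennreal \<delta>" "0 \<le> \<delta>" by (cases "dd y") auto
  define C1 where "C1 = max C 1"
  have C1: "C1 > 0" "C \<le> C1" "1 \<le> C1" by (auto simp: C1_def)
  define E where "E = {t \<in> ivl R. t < \<delta>}"
  have "E = ivl R \<inter> {..<\<delta>}" by (auto simp: E_def)
  then have Eb: "E \<in> sets borel" using ivl_borel[of R] by simp
  have iff: "\<And>t. t \<in> ivl R \<Longrightarrow> ennreal t < dd y \<longleftrightarrow> t < \<delta>"
    unfolding D using D(2) by (auto simp: ivl_def ennreal_less_iff)
  have V: "(\<integral>\<^sup>+ t. indicator {t. ennreal t < dd y} t * ww t \<partial>lborel) = (\<integral>\<^sup>+ t. ennreal (1 / psi t) * indicator E t \<partial>lborel)"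
  proof (intro nn_integral_cong)
    fix t
    show "indicator {t. ennreal t < dd y} t * ww t = ennreal (1 / psi t) * indicator E t"
    proof (cases "t \<in> ivl R")
      case True then show ?thesis using iff[OF True] by (simp add: ww_def E_def indicator_def)
    qed (simp add: ww_def E_def)
  qed
  have KE: "KK y = (SUP u \<in> E. ennreal (psi u))"
  proof -
    have "{u. 0 < u \<and> ereal u < R \<and> ennreal u < dd y} = E"
      using iff by (auto simp: E_def ivl_def)
    then show ?thesis unfolding KK_def by simp
  qed
  have "KK y * (\<integral>\<^sup>+ t. ennreal (1 / psi t) * indicator E t \<partial>lborel) \<le> ennreal (C1 * \<delta>)"
    unfolding KE SUP_mult_right_ennreal
  proof (rule SUP_least)
    fix u assume u: "u \<in> E"
    then have uI: "u \<in> ivl R" and ud: "u < \<delta>" by (auto simp: E_def)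
    have u0: "0 < u" using uI by (auto simp: ivl_def)
    have pu: "psi u > 0" using qc_pos[OF q uI] .
    define E2 where "E2 = E - {0<..<u}"
    have sub1: "{0<..<u} \<subseteq> ivl R" by (rule ivl_sub[OF uI])
    have sub2: "E2 \<subseteq> ivl R" by (auto simp: E2_def E_def)
    have E2b: "E2 \<in> sets borel" unfolding E2_def using Eb by auto
    have split: "\<And>t. ennreal (1 / psi t) * indicator E t = ennreal (1 / psi t) * indicator {0<..<u} t + ennreal (1 / psi t) * indicator E2 t"
      using ud sub1 by (auto simp: indicator_def E2_def E_def)
    have Vs: "(\<integral>\<^sup>+ t. ennreal (1 / psi t) * indicator E t \<partial>lborel) =
       (\<integral>\<^sup>+ t. ennreal (1 / psi t) * indicator {0<..<u} t \<partial>lborel) + (\<integral>\<^sup>+ t. ennreal (1 / psi t) * indicator E2 t \<partial>lborel)"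
      unfolding split by (rule nn_integral_add) (use wmeas2[OF q sub1] wmeas2[OF q sub2 E2b] in auto)
    have V1: "ennreal (psi u) * (\<integral>\<^sup>+ t. ennreal (1 / psi t) * indicator {0<..<u} t \<partial>lborel) \<le> ennreal (C * u)"
    proof -
      let ?V = "\<integral>\<^sup>+ t. ennreal (1 / psi t) * indicator {0<..<u} t \<partial>lborel"
      have "?V = ennreal u * (ennreal (1/u) * ?V)"
        using u0 by (simp add: mult.assoc[symmetric] ennreal_mult[symmetric])
      also have "\<dots> \<le> ennreal u * ennreal (C / psi u)" by (intro mult_left_mono CB uI) auto
      finally have "ennreal (psi u) * ?V \<le> ennreal (psi u) * (ennreal u * ennreal (C / psi u))"
        by (intro mult_left_mono) auto
      also have "\<dots> = ennreal (C * u)" using pu u0 C by (simp flip: ennreal_mult)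
      finally show ?thesis .
    qed
    have V2: "ennreal (psi u) * (\<integral>\<^sup>+ t. ennreal (1 / psi t) * indicator E2 t \<partial>lborel) \<le> ennreal (\<delta> - u)"
    proof -
      have "ennreal (psi u) * (\<integral>\<^sup>+ t. ennreal (1 / psi t) * indicator E2 t \<partial>lborel)
          = (\<integral>\<^sup>+ t. ennreal (psi u) * (ennreal (1 / psi t) * indicator E2 t) \<partial>lborel)"
        by (rule nn_integral_cmult[symmetric]) (use wmeas2[OF q sub2 E2b] in auto)
      also have "\<dots> \<le> (\<integral>\<^sup>+ t. indicator {u..<\<delta>} t \<partial>lborel)"
      proof (intro nn_integral_mono)
        fix t
        show "ennreal (psi u) * (ennreal (1 / psi t) * indicator E2 t) \<le> indicator {u..<\<delta>} t"
        proof (cases "t \<in> E2")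
          case True
          then have tI: "t \<in> ivl R" and ut: "u \<le> t" "t < \<delta>" using u0 by (auto simp: E2_def E_def ivl_def)
          have pt: "psi t > 0" using qc_pos[OF q tI] .
          have "psi u \<le> psi t" using qc_mono[OF q, of u t] u0 ut tI by (auto simp: ivl_def)
          then have "psi u * (1 / psi t) \<le> 1" using pt by (simp add: field_simps)
          then have "ennreal (psi u) * ennreal (1 / psi t) \<le> 1"
            using pu pt by (simp flip: ennreal_mult add: ennreal_le_1)
          then show ?thesis using True ut by simp
        qed simp
      qed
      also have "\<dots> = ennreal (\<delta> - u)" using ud by simp
      finally show ?thesis .
    qed
    have "ennreal (psi u) * (\<integral>\<^sup>+ t. ennreal (1 / psi t) * indicator E t \<partial>lborel) \<le> ennreal (C * u) + ennreal (\<delta> - u)"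
      unfolding Vs distrib_left by (intro add_mono V1 V2)
    also have "\<dots> = ennreal (C * u + (\<delta> - u))" using C u0 ud by (simp add: ennreal_plus)
    also have "\<dots> \<le> ennreal (C1 * \<delta>)"
    proof (rule ennreal_leI)
      have "C * u \<le> C1 * u" using C1 u0 by (intro mult_right_mono) auto
      moreover have "\<delta> - u \<le> C1 * (\<delta> - u)" using C1 ud by (simp add: mult_le_cancel_right1)
      ultimately show "C * u + (\<delta> - u) \<le> C1 * \<delta>" by (simp add: algebra_simps)
    qed
    finally show "ennreal (psi u) * (\<integral>\<^sup>+ t. ennreal (1 / psi t) * indicator E t \<partial>lborel) \<le> ennreal (C1 * \<delta>)" .
  qed
  then have "KK y * (\<integral>\<^sup>+ t. indicator {t. ennreal t < dd y} t * ww t \<partial>lborel) \<le> ennreal (C1 * \<delta>)"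
    by (simp only: V)
  moreover have "ennreal (C1 * \<delta>) = ennreal (max C 1) * dd y" using C1 D by (simp add: ennreal_mult C1_def)
  ultimately show ?thesis by simp
qed

lemma layer:
  "(\<integral>\<^sup>+ y. dd y * indicator {0<..} y \<partial>lborel) = L1norm R gg"
proof -
  interpret L: sigma_finite_measure "lebesgue :: real measure" by (rule sigma_finite_lebesgue)
  interpret P: pair_sigma_finite "lebesgue :: real measure" lborel ..
  define H where "H x y = (indicator (ivl R) x * indicator {0<..} y * of_bool (ennreal y < gg x) :: ennreal)" for x y :: real
  have Hm: "case_prod H \<in> borel_measurable (lebesgue \<Otimes>\<^sub>M lborel)"
    unfolding H_def using ivl_lebesgue[of R] by measurable
  have "\<And>y. dd y * indicator {0<..} y = (\<integral>\<^sup>+ x. H x y \<partial>lebesgue)"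
  proof -
    fix y :: real
    have S: "{x \<in> ivl R. ennreal y < gg x} \<in> sets lebesgue"
    proof -
      have "{x \<in> ivl R. ennreal y < gg x} = ivl R \<inter> {x \<in> space lebesgue. ennreal y < gg x}" by auto
      also have "\<dots> \<in> sets lebesgue" using ivl_lebesgue by measurable
      finally show ?thesis .
    qed
    have "dd y = (\<integral>\<^sup>+ x. indicator {x \<in> ivl R. ennreal y < gg x} x \<partial>lebesgue)"
      unfolding dd_def distf_def using S by simp
    moreover have "(\<integral>\<^sup>+ x. indicator {x \<in> ivl R. ennreal y < gg x} x * indicator {0<..} y \<partial>lebesgue)
        = (\<integral>\<^sup>+ x. indicator {x \<in> ivl R. ennreal y < gg x} x \<partial>lebesgue) * indicator {0<..} y"
      by (rule nn_integral_multc) (use S in simp)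
    ultimately have "dd y * indicator {0<..} y = (\<integral>\<^sup>+ x. indicator {x \<in> ivl R. ennreal y < gg x} x * indicator {0<..} y \<partial>lebesgue)"
      by simp
    also have "\<dots> = (\<integral>\<^sup>+ x. H x y \<partial>lebesgue)"
      by (intro nn_integral_cong) (auto simp: H_def indicator_def)
    finally show "dd y * indicator {0<..} y = (\<integral>\<^sup>+ x. H x y \<partial>lebesgue)" .
  qed
  then have "(\<integral>\<^sup>+ y. dd y * indicator {0<..} y \<partial>lborel) = (\<integral>\<^sup>+ y. (\<integral>\<^sup>+ x. H x y \<partial>lebesgue) \<partial>lborel)"
    by simp
  also have "\<dots> = (\<integral>\<^sup>+ x. (\<integral>\<^sup>+ y. H x y \<partial>lborel) \<partial>lebesgue)"
    by (rule P.Fubini') (rule Hm)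
  also have "\<dots> = (\<integral>\<^sup>+ x. gg x * indicator (ivl R) x \<partial>lebesgue)"
  proof (intro nn_integral_cong)
    fix x
    have "(\<integral>\<^sup>+ y. H x y \<partial>lborel) = (\<integral>\<^sup>+ y. indicator (ivl R) x * indicator {0<..<\<bar>f x\<bar>} y \<partial>lborel)"
      by (intro nn_integral_cong) (auto simp: H_def gg_def indicator_def ennreal_less_iff)
    also have "\<dots> = indicator (ivl R) x * ennreal \<bar>f x\<bar>" by (simp add: nn_integral_cmult_indicator)
    finally show "(\<integral>\<^sup>+ y. H x y \<partial>lborel) = gg x * indicator (ivl R) x" by (simp add: gg_def mult.commute)
  qed
  finally show ?thesis unfolding L1norm_def .
qed

lemma partI_suff_f:
  assumes C: "C > 0" and CB: "\<And>t. t \<in> ivl R \<Longrightarrow>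
     ennreal (1 / t) * (\<integral>\<^sup>+ s \<in> {0<..<t}. ennreal (1 / psi s) \<partial>lborel) \<le> ennreal (C / psi t)"
  shows "L1norm R (Tpsi psi R gg) \<le> ennreal (max C 1) * L1norm R gg"
proof -
  define F where "F t y = KK y * indicator {0<..} y * (of_bool (ennreal t < dd y) * ww t)" for t y :: real
  have Fm: "case_prod F \<in> borel_measurable (lborel \<Otimes>\<^sub>M lborel)"
    unfolding F_def by measurable
  have "L1norm R (Tpsi psi R gg) = (\<integral>\<^sup>+ t. Tpsi psi R gg t * indicator (ivl R) t \<partial>lborel)"
    unfolding L1norm_def by (simp add: nn_integral_completion)
  also have "\<dots> \<le> (\<integral>\<^sup>+ t. GG t * ww t \<partial>lborel)"
  proof (intro nn_integral_mono)
    fix t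
    show "Tpsi psi R gg t * indicator (ivl R) t \<le> GG t * ww t"
    proof (cases "t \<in> ivl R")
      case True then show ?thesis using stepB[OF True] by (simp add: ww_def)
    qed (simp add: ww_def)
  qed
  also have "\<dots> = (\<integral>\<^sup>+ t. (\<integral>\<^sup>+ y. F t y \<partial>lborel) \<partial>lborel)"
  proof (intro nn_integral_cong)
    fix t
    have "GG t * ww t = (\<integral>\<^sup>+ y. KK y * indicator {0<..} y * indicator {y. ennreal t < dd y} y * ww t \<partial>lborel)"
      unfolding GG_def by (rule nn_integral_multc[symmetric]) measurable
    also have "\<dots> = (\<integral>\<^sup>+ y. F t y \<partial>lborel)"
      by (intro nn_integral_cong) (simp add: F_def indicator_def mult.assoc)
    finally show "GG t * ww t = (\<integral>\<^sup>+ y. F t y \<partial>lborel)" .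
  qed
  also have "\<dots> = (\<integral>\<^sup>+ y. (\<integral>\<^sup>+ t. F t y \<partial>lborel) \<partial>lborel)"
    by (rule lborel_pair.Fubini'[symmetric]) (rule Fm)
  also have "\<dots> \<le> (\<integral>\<^sup>+ y. ennreal (max C 1) * (dd y * indicator {0<..} y) \<partial>lborel)"
  proof (intro nn_integral_mono)
    fix y
    have "(\<integral>\<^sup>+ t. F t y \<partial>lborel) = KK y * indicator {0<..} y * (\<integral>\<^sup>+ t. indicator {t. ennreal t < dd y} t * ww t \<partial>lborel)"
    proof -
      have "(\<integral>\<^sup>+ t. F t y \<partial>lborel) = (\<integral>\<^sup>+ t. KK y * indicator {0<..} y * (indicator {t. ennreal t < dd y} t * ww t) \<partial>lborel)"
        by (intro nn_integral_cong) (simp add: F_def indicator_def)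
      also have "\<dots> = KK y * indicator {0<..} y * (\<integral>\<^sup>+ t. indicator {t. ennreal t < dd y} t * ww t \<partial>lborel)"
        by (rule nn_integral_cmult) measurable
      finally show ?thesis .
    qed
    also have "\<dots> = indicator {0<..} y * (KK y * (\<integral>\<^sup>+ t. indicator {t. ennreal t < dd y} t * ww t \<partial>lborel))"
      by (simp add: ac_simps)
    also have "\<dots> \<le> indicator {0<..} y * (ennreal (max C 1) * dd y)"
      by (intro mult_left_mono stepE[OF C CB]) auto
    finally show "(\<integral>\<^sup>+ t. F t y \<partial>lborel) \<le> ennreal (max C 1) * (dd y * indicator {0<..} y)"
      by (simp add: ac_simps)
  qed
  also have "\<dots> = ennreal (max C 1) * (\<integral>\<^sup>+ y. dd y * indicator {0<..} y \<partial>lborel)"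
    by (rule nn_integral_cmult) measurable
  also have "\<dots> = ennreal (max C 1) * L1norm R gg" by (simp only: layer)
  finally show ?thesis .
qed

end

theorem lemma3p1:
  fixes R :: ereal and psi :: "real \<Rightarrow> real"
  assumes "0 < R" and "quasiconcave_fn R psi"
  shows "((\<exists>C::real. \<forall>f::real \<Rightarrow> real. f \<in> borel_measurable lebesgue \<longrightarrow>
              L1norm R (\<lambda>x. ennreal \<bar>f x\<bar>) < \<infinity> \<longrightarrow>
              L1norm R (Tpsi psi R (\<lambda>x. ennreal \<bar>f x\<bar>)) \<le> ennreal C * L1norm R (\<lambda>x. ennreal \<bar>f x\<bar>))
          \<longleftrightarrow> B_condition R psi)
       \<and> ((\<exists>C::real. \<forall>f::real \<Rightarrow> real. f \<in> borel_measurable lebesgue \<longrightarrow>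
              Mnorm psi R (\<lambda>x. ennreal \<bar>f x\<bar>) < \<infinity> \<longrightarrow>
              Mnorm psi R (Tpsi psi R (\<lambda>x. ennreal \<bar>f x\<bar>)) \<le> ennreal C * Mnorm psi R (\<lambda>x. ennreal \<bar>f x\<bar>))
          \<longleftrightarrow> B_condition R psi)"
proof (intro conjI iffI)
  note q = assms(2)
  show "B_condition R psi" if "\<exists>C::real. \<forall>f::real \<Rightarrow> real. f \<in> borel_measurable lebesgue \<longrightarrow>
              L1norm R (\<lambda>x. ennreal \<bar>f x\<bar>) < \<infinity> \<longrightarrow>
              L1norm R (Tpsi psi R (\<lambda>x. ennreal \<bar>f x\<bar>)) \<le> ennreal C * L1norm R (\<lambda>x. ennreal \<bar>f x\<bar>)"
    by (rule partI_nec[OF q that])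
  show "B_condition R psi" if "\<exists>C::real. \<forall>f::real \<Rightarrow> real. f \<in> borel_measurable lebesgue \<longrightarrow>
              Mnorm psi R (\<lambda>x. ennreal \<bar>f x\<bar>) < \<infinity> \<longrightarrow>
              Mnorm psi R (Tpsi psi R (\<lambda>x. ennreal \<bar>f x\<bar>)) \<le> ennreal C * Mnorm psi R (\<lambda>x. ennreal \<bar>f x\<bar>)"
    by (rule partII_nec[OF q that])
next
  note q = assms(2)
  assume B: "B_condition R psi"
  obtain C where C: "C > 0" and CB: "\<And>t. t \<in> ivl R \<Longrightarrow>
     ennreal (1 / t) * (\<integral>\<^sup>+ s \<in> {0<..<t}. ennreal (1 / psi s) \<partial>lborel) \<le> ennreal (C / psi t)"
    using B unfolding B_condition_def by blast
  show "\<exists>C::real. \<forall>f::real \<Rightarrow> real. f \<in> borel_measurable lebesgue \<longrightarrow>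
              L1norm R (\<lambda>x. ennreal \<bar>f x\<bar>) < \<infinity> \<longrightarrow>
              L1norm R (Tpsi psi R (\<lambda>x. ennreal \<bar>f x\<bar>)) \<le> ennreal C * L1norm R (\<lambda>x. ennreal \<bar>f x\<bar>)"
  proof (intro exI allI impI)
    fix f :: "real \<Rightarrow> real" assume fm: "f \<in> borel_measurable lebesgue"
    show "L1norm R (Tpsi psi R (\<lambda>x. ennreal \<bar>f x\<bar>)) \<le> ennreal (max C 1) * L1norm R (\<lambda>x. ennreal \<bar>f x\<bar>)"
      using partI_suff_f[OF q fm C CB] unfolding gg_def[OF q fm] .
  qed
next
  note q = assms(2)
  assume B: "B_condition R psi"
  obtain C where C: "\<forall>g. Mnorm psi R (Tpsi psi R g) \<le> ennreal C * Mnorm psi R g"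
    using partii_suff[OF q B] by blast
  show "\<exists>C::real. \<forall>f::real \<Rightarrow> real. f \<in> borel_measurable lebesgue \<longrightarrow>
              Mnorm psi R (\<lambda>x. ennreal \<bar>f x\<bar>) < \<infinity> \<longrightarrow>
              Mnorm psi R (Tpsi psi R (\<lambda>x. ennreal \<bar>f x\<bar>)) \<le> ennreal C * Mnorm psi R (\<lambda>x. ennreal \<bar>f x\<bar>)"
    using C by (intro exI[of _ C] allI impI) simp
qed

end
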